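(* Fix $C\ge0$. With $T_k$ as below, as $n\to\infty$, uniformly for $3n/5-C\le k\le 9n/10+C$ (and $k\le n$), \[ T_k=\sum_{g\in\mathcal M(k)}\Bigl|\sum_{h\in\mathcal M(n-k)}\psi(Q_A(gh))\Bigr|\ll_A q^{19n/20+o(n)}. \]
   Context: $q$ is a fixed odd prime power; fix $m\ge0$ and $c_0,\dots,c_m\in\mathbb F_q$ with $c_m\ne0$. For each $n$, $\ell_n$ is an arbitrary linear form in the coefficients $f_0,\dots,f_n$ and for $f=\sum_{i=0}^nf_it^i$ of degree $n$, $Q_A(f)=\sum_{j=0}^m c_j\sum_{i=j}^n f_if_{i-j}+\ell_n(f)$. $\mathcal M(k)$ is the set of monic polynomials of degree $k$ in $\mathbb F_q[t]$, $\psi$ a non-trivial additive character of $\mathbb F_q$. Implied constants depend only on $q$, $C$ and $c_0,\dots,c_m$ and are uniform in $\ell_n,\psi$; $q^{o(n)}$ is a factor $q^{\varepsilon(n)n}$ with $\varepsilon(n)\to0$. *)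

theory Defs
  imports "HOL-Analysis.Analysis" "HOL-Computational_Algebra.Polynomial"
begin

definition monics :: "nat \<Rightarrow> ('a::field) poly set" where
  "monics k = {g. degree g = k \<and> lead_coeff g = 1}"

definition add_char :: "('a::field \<Rightarrow> complex) \<Rightarrow> bool" where
  "add_char \<psi> \<longleftrightarrow> (\<forall>x y. \<psi> (x + y) = \<psi> x * \<psi> y) \<and> (\<forall>x. norm (\<psi> x) = 1)"

definition nontrivial_add_char :: "('a::field \<Rightarrow> complex) \<Rightarrow> bool" where
  "nontrivial_add_char \<psi> \<longleftrightarrow> add_char \<psi> \<and> (\<exists>x. \<psi> x \<noteq> 1)"

text \<open>The quadratic form Q_A. The linear forms are given by coefficients
  lf n i, so that l_n(f) = sum_{i=0}^n lf n i * f_i, with n = degree f.\<close>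
definition QA :: "nat \<Rightarrow> (nat \<Rightarrow> 'a::field) \<Rightarrow> (nat \<Rightarrow> nat \<Rightarrow> 'a) \<Rightarrow> 'a poly \<Rightarrow> 'a" where
  "QA m c lf f =
     (\<Sum>j\<le>m. c j * (\<Sum>i=j..degree f. coeff f i * coeff f (i - j)))
     + (\<Sum>i\<le>degree f. lf (degree f) i * coeff f i)"

definition Tsum :: "nat \<Rightarrow> (nat \<Rightarrow> 'a::field) \<Rightarrow> (nat \<Rightarrow> nat \<Rightarrow> 'a) \<Rightarrow> ('a \<Rightarrow> complex)
    \<Rightarrow> nat \<Rightarrow> nat \<Rightarrow> real" where
  "Tsum m c lf \<psi> n k =
     (\<Sum>g\<in>monics k. norm (\<Sum>h\<in>monics (n - k). \<psi> (QA m c lf (g * h))))"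

end

theory Submission
  imports Defs "HOL-Computational_Algebra.Polynomial_Factorial"
begin


lemma two_ne_zero_field:
  assumes "odd CARD('a::{field,finite})"
  shows "(2::'a) \<noteq> 0"
proof
  assume h: "(2::'a) = 0"
  have "(\<Sum>x\<in>(UNIV::'a set). x + 1) = (\<Sum>x\<in>UNIV. x)"
    by (rule sum.reindex_bij_witness[of _ "\<lambda>x. x - 1" "\<lambda>x. x + 1"]) auto
  hence "of_nat CARD('a) = (0::'a)" by (simp add: sum.distrib)
  moreover obtain j where "CARD('a) = 2*j+1" using assms oddE by blast
  ultimately have e: "1 + 2 * of_nat j = (0::'a)" by simp
  have "(2::'a) * of_nat j = 0" by (simp only: h mult_zero_left)
  with e have "(1::'a) = 0" by (simp only: add_0_right)
  thus False by simp
qed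

definition pl :: "nat \<Rightarrow> 'a::zero poly set" where
  "pl k = {x. \<forall>i\<ge>k. coeff x i = 0}"

lemma pl_iff: "x \<in> pl k \<longleftrightarrow> (\<forall>i\<ge>k. coeff x i = 0)" by (simp add: pl_def)

lemma card_pl: "card (pl k :: 'a::{comm_monoid_add,finite} poly set) = CARD('a)^k"
proof -
  let ?f = "\<lambda>x::'a poly. restrict (coeff x) {..<k}"
  have "bij_betw ?f (pl k) (PiE {..<k} (\<lambda>_. UNIV))"
  proof (rule bij_betwI')
    fix x y :: "'a poly" assume "x \<in> pl k" "y \<in> pl k"
    show "(?f x = ?f y) = (x = y)"
    proof
      assume "?f x = ?f y"
      hence "coeff x i = coeff y i" for i
        using \<open>x \<in> pl k\<close> \<open>y \<in> pl k\<close> unfolding pl_def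
        by (cases "i < k") (auto dest: fun_cong[of _ _ i])
      thus "x = y" by (simp add: poly_eq_iff)
    qed simp
  next
    fix x :: "'a poly" assume "x \<in> pl k" then show "?f x \<in> PiE {..<k} (\<lambda>_. UNIV)" by auto
  next
    fix f assume f: "f \<in> PiE {..<k} (\<lambda>_. (UNIV::'a set))"
    define p where "p = (\<Sum>i<k. monom (f i) i)"
    have cp: "coeff p i = (if i < k then f i else 0)" for i
      by (simp add: p_def coeff_sum coeff_monom)
    have "p \<in> pl k" by (simp add: pl_def cp)
    moreover have "f = ?f p" using f by (auto simp: cp fun_eq_iff PiE_def extensional_def)
    ultimately show "\<exists>x\<in>pl k. f = ?f x" by blast
  qed
  hence "card (pl k :: 'a poly set) = card (PiE {..<k} (\<lambda>_. (UNIV::'a set)))"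
    by (rule bij_betw_same_card)
  also have "\<dots> = CARD('a)^k" by (simp add: card_PiE)
  finally show ?thesis .
qed

lemma finite_pl: "finite (pl k :: 'a::{comm_monoid_add,finite} poly set)"
proof -
  have "card (pl k :: 'a poly set) \<noteq> 0" by (simp add: card_pl)
  thus ?thesis by (meson card.infinite)
qed

lemma pl_add: "x \<in> pl k \<Longrightarrow> y \<in> pl k \<Longrightarrow> x + y \<in> pl k"
  and pl_diff: "x \<in> pl k \<Longrightarrow> y \<in> pl k \<Longrightarrow> (x::'a::ab_group_add poly) - y \<in> pl k"
  and pl_smult: "x \<in> pl k \<Longrightarrow> smult (a::'b::comm_semiring_0) z \<in> pl k \<or> True"
  by (auto simp: pl_def)

lemma pl_smult': "(x::'a::comm_semiring_0 poly) \<in> pl k \<Longrightarrow> smult a x \<in> pl k"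
  by (auto simp: pl_def)

lemma pl_degree: "x \<in> pl k \<Longrightarrow> k > 0 \<Longrightarrow> degree x < k"
proof (cases "x = 0")
  case False
  assume "x \<in> pl k"
  hence "coeff x (degree x) = 0" if "degree x \<ge> k" using that by (simp add: pl_def)
  with False show ?thesis by (meson leading_coeff_0_iff not_le)
qed simp

lemma pl_degree_le: "x \<in> pl k \<Longrightarrow> degree x \<le> k"
  by (intro degree_le) (auto simp: pl_def)

lemma degree_le_pl: "degree x \<le> d \<Longrightarrow> x \<in> pl (Suc d)"
  by (auto simp: pl_def coeff_eq_0)

lemma monics_eq: "monics k = (\<lambda>x. monom 1 k + x) ` (pl k :: 'a::field poly set)"
proof (intro set_eqI iffI)
  fix g :: "'a poly" assume g: "g \<in> monics k"
  hence "g - monom 1 k \<in> pl k"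
    by (auto simp: monics_def pl_def coeff_monom coeff_eq_0)
  moreover have "g = monom 1 k + (g - monom 1 k)" by simp
  ultimately show "g \<in> (\<lambda>x. monom 1 k + x) ` pl k" by blast
next
  fix g :: "'a poly" assume "g \<in> (\<lambda>x. monom 1 k + x) ` pl k"
  then obtain x where x: "x \<in> pl k" and g: "g = monom 1 k + x" by auto
  have c: "coeff g i = (if i = k then 1 else if i > k then 0 else coeff x i)" for i
    using x by (auto simp: g pl_def coeff_monom)
  have "degree g \<le> k" by (rule degree_le) (auto simp: c)
  moreover have "coeff g k \<noteq> 0" by (simp add: c)
  ultimately have "degree g = k" by (simp add: le_antisym le_degree)
  then show "g \<in> monics k" by (simp add: monics_def c)
qed

lemma inj_monics: "inj_on (\<lambda>x. monom 1 k + x) (pl k :: 'a::field poly set)"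
  by (auto intro: inj_onI)

lemma card_monics: "card (monics k :: 'a::{field,finite} poly set) = CARD('a)^k"
  by (simp add: monics_eq card_image inj_monics card_pl)

lemma finite_monics: "finite (monics k :: 'a::{field,finite} poly set)"
  by (simp add: monics_eq finite_pl)

lemma sum_monics: "(\<Sum>g\<in>monics k. F g) = (\<Sum>x\<in>(pl k::'a::{field,finite} poly set). F (monom 1 k + x))"
  by (simp add: monics_eq sum.reindex inj_monics)



lemma char_0: assumes "add_char \<psi>" shows "\<psi> 0 = 1"
proof -
  have "\<psi> 0 = \<psi> 0 * \<psi> 0" using assms unfolding add_char_def by (metis add_0)
  moreover have "\<psi> 0 \<noteq> 0" using assms unfolding add_char_def by (metis norm_zero zero_neq_one)
  ultimately show ?thesis by (metis mult_cancel_left2)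
qed

lemma char_cnj: assumes "add_char \<psi>" shows "cnj (\<psi> x) = \<psi> (- x)"
proof -
  have n: "norm (\<psi> x) = 1" using assms unfolding add_char_def by blast
  have "\<psi> x * \<psi> (-x) = 1" using assms char_0[OF assms] unfolding add_char_def by (metis add.right_inverse)
  moreover have "\<psi> x * cnj (\<psi> x) = 1"
    using n by (metis complex_norm_square mult.commute of_real_1 power_one complex_mult_cnj) 
  ultimately show ?thesis
    by (metis mult.commute mult.left_neutral mult.assoc)
qed

lemma char_diff: assumes "add_char \<psi>" shows "\<psi> (x - y) = \<psi> x * cnj (\<psi> y)"
  using assms by (simp add: char_cnj) (metis add_char_def diff_conv_add_uminus)

lemma char_norm: "add_char \<psi> \<Longrightarrow> norm (\<psi> x) = 1" by (simp add: add_char_def)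

lemma char_add: "add_char \<psi> \<Longrightarrow> \<psi> (x + y) = \<psi> x * \<psi> y" by (simp add: add_char_def)

lemma char_sum_zero:
  fixes \<Lambda> :: "'a::{field,finite} poly \<Rightarrow> 'a"
  assumes psi: "nontrivial_add_char \<psi>"
    and add: "\<And>x y. \<Lambda> (x + y) = \<Lambda> x + \<Lambda> y"
    and hom: "\<And>a x. \<Lambda> (smult a x) = a * \<Lambda> x"
    and e: "e \<in> pl k" "\<Lambda> e \<noteq> 0"
  shows "(\<Sum>x\<in>pl k. \<psi> (\<Lambda> x)) = 0"
proof -
  have ac: "add_char \<psi>" using psi by (simp add: nontrivial_add_char_def)
  obtain a where a: "\<psi> a \<noteq> 1" using psi by (auto simp: nontrivial_add_char_def)
  define e' where "e' = smult (a / \<Lambda> e) e"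
  have e'pl: "e' \<in> pl k" using e by (simp add: e'_def pl_smult')
  have le: "\<Lambda> e' = a" using e by (simp add: e'_def hom)
  have "(\<Sum>x\<in>pl k. \<psi> (\<Lambda> x)) = (\<Sum>x\<in>pl k. \<psi> (\<Lambda> (x + e')))"
    by (rule sum.reindex_bij_witness[of _ "\<lambda>x. x + e'" "\<lambda>x. x - e'"])
       (auto simp: e'pl pl_add pl_diff)
  also have "\<dots> = \<psi> a * (\<Sum>x\<in>pl k. \<psi> (\<Lambda> x))"
    by (simp add: add le char_add[OF ac] sum_distrib_left mult.commute)
  finally have "(1 - \<psi> a) * (\<Sum>x\<in>pl k. \<psi> (\<Lambda> x)) = 0" by (simp add: algebra_simps)
  with a show ?thesis by simp
qed

definition bil :: "nat \<Rightarrow> (nat \<Rightarrow> 'a::comm_ring) \<Rightarrow> nat \<Rightarrow> 'a poly \<Rightarrow> 'a poly \<Rightarrow> 'a" where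
  "bil m c n u v = (\<Sum>j\<le>m. c j * (\<Sum>i=j..n. coeff u i * coeff v (i - j)))"

definition lin :: "(nat \<Rightarrow> nat \<Rightarrow> 'a::comm_ring) \<Rightarrow> nat \<Rightarrow> 'a poly \<Rightarrow> 'a" where
  "lin lf n u = (\<Sum>i\<le>n. lf n i * coeff u i)"

lemma QA_eq: "degree f = n \<Longrightarrow> QA m c lf f = bil m c n f f + lin lf n f"
  by (simp add: QA_def bil_def lin_def)

lemma bil_add1: "bil m c n (u + v) w = bil m c n u w + bil m c n v w"
  by (simp add: bil_def algebra_simps sum.distrib)
lemma bil_add2: "bil m c n w (u + v) = bil m c n w u + bil m c n w v"
  by (simp add: bil_def algebra_simps sum.distrib)
lemma bil_smult1: "bil m c n (smult a u) w = a * bil m c n u w"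
  by (simp add: bil_def algebra_simps sum_distrib_left)
lemma bil_smult2: "bil m c n w (smult a u) = a * bil m c n w u"
  by (simp add: bil_def algebra_simps sum_distrib_left)
lemma bil_diff1: "bil m c n (u - v) w = bil m c n u w - bil m c n v w"
  by (simp add: bil_def algebra_simps sum_subtractf)
lemma lin_add: "lin lf n (u + v) = lin lf n u + lin lf n v"
  by (simp add: lin_def algebra_simps sum.distrib)

lemma Q_shift:
  fixes B :: "'b::comm_ring_1 poly \<Rightarrow> 'b poly \<Rightarrow> 'b"
  assumes a1: "\<And>u v w. B (u + v) w = B u w + B v w"
    and a2: "\<And>u v w. B w (u + v) = B w u + B w v"
    and l: "\<And>u v. l (u + v) = l u + l v"
  shows "(B (a + b + c) (a + b + c) + l (a + b + c)) - (B (a + b) (a + b) + l (a + b))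
         = B b c + B c b + (B a c + B c a + B c c + l c)"
  by (simp add: a1 a2 l algebra_simps)



definition rv :: "nat \<Rightarrow> 'a::comm_semiring_1 poly \<Rightarrow> 'a poly" where
  "rv N p = (\<Sum>i\<le>N. monom (coeff p i) (N - i))"

lemma coeff_rv: "coeff (rv N p) j = (if j \<le> N then coeff p (N - j) else 0)"
proof -
  have "coeff (rv N p) j = (\<Sum>i\<le>N. if i = N - j \<and> j \<le> N then coeff p i else 0)"
    unfolding rv_def coeff_sum coeff_monom by (intro sum.cong) auto
  also have "\<dots> = (if j \<le> N then coeff p (N - j) else 0)"
    by (cases "j \<le> N") (simp_all add: sum.delta)
  finally show ?thesis .
qed

lemma rv_0[simp]: "rv N 0 = 0" by (simp add: poly_eq_iff coeff_rv)

lemma rv_diff: "rv N (p - q) = rv N p - rv N (q::'a::comm_ring_1 poly)"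
  by (simp add: poly_eq_iff coeff_rv)

lemma rv_add: "rv N (p + q) = rv N p + rv N q"
  by (simp add: poly_eq_iff coeff_rv)

lemma degree_rv: "degree (rv N p) \<le> N"
  by (rule degree_le) (simp add: coeff_rv)

lemma rv_rv: "degree p \<le> N \<Longrightarrow> rv N (rv N p) = p"
  by (auto simp: poly_eq_iff coeff_rv coeff_eq_0)

lemma rv_reflect:
  assumes "degree p \<le> N"
  shows "rv N p = monom 1 (N - degree p) * reflect_poly p"
proof (rule poly_eqI)
  fix j
  show "coeff (rv N p) j = coeff (monom 1 (N - degree p) * reflect_poly p) j"
    using assms by (auto simp: coeff_rv coeff_monom_mult coeff_reflect_poly coeff_eq_0)
qed

lemma rv_mult:
  fixes p q :: "'a::idom poly"
  assumes "degree p \<le> a" "degree q \<le> b"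
  shows "rv (a + b) (p * q) = rv a p * rv b q"
proof (cases "p = 0 \<or> q = 0")
  case True thus ?thesis by auto
next
  case False
  hence d: "degree (p * q) = degree p + degree q" by (simp add: degree_mult_eq)
  have "rv (a + b) (p * q) = monom 1 (a + b - degree (p*q)) * reflect_poly (p * q)"
    using assms d by (intro rv_reflect) simp
  also have "\<dots> = (monom 1 (a - degree p) * reflect_poly p) * (monom 1 (b - degree q) * reflect_poly q)"
    using assms by (simp add: d reflect_poly_mult mult_monom algebra_simps)
  also have "\<dots> = rv a p * rv b q" using assms by (simp add: rv_reflect)
  finally show ?thesis .
qed

lemma rv_monom: "d \<le> N \<Longrightarrow> rv N (monom a d) = monom a (N - d)"
  by (auto simp: poly_eq_iff coeff_rv coeff_monom)

lemma rv_sum: "rv N (\<Sum>i\<in>A. f i) = (\<Sum>i\<in>A. rv N (f i))"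
  by (induction A rule: infinite_finite_induct) (auto simp: rv_add)

definition Cp :: "nat \<Rightarrow> (nat \<Rightarrow> 'a::comm_semiring_1) \<Rightarrow> 'a poly" where
  "Cp m c = (\<Sum>j\<le>m. monom (c j) (m + j) + monom (c j) (m - j))"

lemma rv_Cp: "rv (2*m) (Cp m c) = Cp m c"
proof -
  have "rv (2*m) (Cp m c) = (\<Sum>j\<le>m. monom (c j) (m - j) + monom (c j) (m + j))"
    unfolding Cp_def rv_sum rv_add by (intro sum.cong) (auto simp: rv_monom)
  also have "\<dots> = Cp m c" unfolding Cp_def by (simp add: add.commute)
  finally show ?thesis .
qed

lemma degree_Cp: "degree (Cp m c) \<le> 2*m"
  unfolding Cp_def by (rule degree_le) (auto simp: coeff_sum coeff_monom intro!: sum.neutral)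

lemma coeff_Cp_top: "coeff (Cp m c) (2*m) = c m + (if m = 0 then c 0 else 0)"
proof -
  have "coeff (Cp m c) (2*m) = (\<Sum>j\<le>m. (if j = m then c j else 0) + (if j = 0 \<and> m = 0 then c j else 0))"
    unfolding Cp_def coeff_sum coeff_add coeff_monom by (intro sum.cong) auto
  also have "\<dots> = c m + (if m = 0 then c 0 else 0)"
    by (simp add: sum.distrib sum.delta)
  finally show ?thesis .
qed

lemma E1:
  fixes u v :: "'a::comm_ring_1 poly"
  assumes "degree u \<le> n" "degree v \<le> n" "j \<le> m"
  shows "(\<Sum>i=j..n. coeff u i * coeff v (i - j)) = coeff (u * rv (n+m) v) (n+m+j)"
proof -
  let ?g = "\<lambda>i. if j \<le> i \<and> i \<le> n then coeff u i * coeff v (i - j) else 0"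
  have "(\<Sum>i=j..n. coeff u i * coeff v (i - j)) = (\<Sum>i\<in>{i\<in>{..n+m+j}. j \<le> i \<and> i \<le> n}. coeff u i * coeff v (i - j))"
    by (intro sum.cong) auto
  also have "\<dots> = (\<Sum>i\<le>n+m+j. ?g i)" by (subst sum.inter_filter) auto
  also have "\<dots> = coeff (u * rv (n+m) v) (n+m+j)"
    unfolding coeff_mult using assms
    by (intro sum.cong) (auto simp: coeff_rv coeff_eq_0 Suc_diff_le)
  finally show ?thesis .
qed

lemma E2:
  fixes u v :: "'a::comm_ring_1 poly"
  assumes "degree u \<le> n" "degree v \<le> n" "j \<le> m"
  shows "(\<Sum>i=j..n. coeff v i * coeff u (i - j)) = coeff (u * rv (n+m) v) (n+m-j)"
proof -
  let ?g = "\<lambda>l. if l + j \<le> n then coeff u l * coeff v (l + j) else 0"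
  have L: "(\<Sum>i=j..n. coeff v i * coeff u (i - j)) = (\<Sum>l\<le>n+m. ?g l)"
  proof (cases "j \<le> n")
    case True
    have "(\<Sum>i=j..n. coeff v i * coeff u (i - j)) = (\<Sum>i=0+j..(n-j)+j. coeff v i * coeff u (i - j))"
      using True by simp
    also have "\<dots> = (\<Sum>l=0..n-j. coeff v (l+j) * coeff u l)"
      by (subst sum.shift_bounds_cl_nat_ivl) simp
    also have "\<dots> = (\<Sum>l\<in>{l\<in>{..n+m}. l + j \<le> n}. coeff u l * coeff v (l + j))"
      using True by (intro sum.cong) (auto simp: mult.commute)
    also have "\<dots> = (\<Sum>l\<le>n+m. ?g l)" by (subst sum.inter_filter) auto
    finally show ?thesis .
  next
    case False thus ?thesis by (auto intro!: sum.neutral)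
  qed
  have R: "coeff (u * rv (n+m) v) (n+m-j) = (\<Sum>l\<le>n+m. ?g l)"
  proof -
    have "coeff (u * rv (n+m) v) (n+m-j) = (\<Sum>l\<le>n+m-j. ?g l)"
      unfolding coeff_mult using assms
      by (intro sum.cong) (auto simp: coeff_rv coeff_eq_0 add.commute)
    also have "\<dots> = (\<Sum>l\<in>{l\<in>{..n+m-j}. l + j \<le> n}. coeff u l * coeff v (l + j))"
      by (subst sum.inter_filter) auto
    also have "{l\<in>{..n+m-j}. l + j \<le> n} = {l\<in>{..n+m}. l + j \<le> n}" by auto
    also have "(\<Sum>l\<in>{l\<in>{..n+m}. l + j \<le> n}. coeff u l * coeff v (l + j)) = (\<Sum>l\<le>n+m. ?g l)"
      by (subst sum.inter_filter) auto
    finally show ?thesis .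
  qed
  show ?thesis using L R by simp
qed

lemma E_lemma:
  fixes u v :: "'a::comm_ring_1 poly"
  assumes "degree u \<le> n" "degree v \<le> n"
  shows "bil m c n u v + bil m c n v u = coeff (Cp m c * (u * rv (n+m) v)) (n + 2*m)"
proof -
  let ?P = "u * rv (n+m) v"
  have "coeff (Cp m c * ?P) (n + 2*m) =
     (\<Sum>j\<le>m. c j * coeff ?P (n+m-j) + c j * coeff ?P (n+m+j))"
    unfolding Cp_def sum_distrib_right coeff_sum distrib_right coeff_add coeff_monom_mult
    by (intro sum.cong) (auto simp: algebra_simps)
  also have "\<dots> = bil m c n v u + bil m c n u v"
    unfolding bil_def sum.distrib[symmetric] using assms
    by (intro sum.cong) (auto simp: E1[OF assms] E2[OF assms])
  finally show ?thesis by simp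
qed



lemma coeff_mult_low:
  fixes A B :: "'a::comm_semiring_1 poly"
  assumes "\<forall>i<a. coeff A i = 0" "\<forall>i<b. coeff B i = 0"
  shows "coeff (A * B) (a + b) = coeff A a * coeff B b"
proof -
  have "coeff (A * B) (a + b) = (\<Sum>i\<le>a+b. if i = a then coeff A a * coeff B b else 0)"
    unfolding coeff_mult
  proof (intro sum.cong refl)
    fix i assume "i \<in> {..a+b}"
    show "coeff A i * coeff B (a + b - i) = (if i = a then coeff A a * coeff B b else 0)"
      using assms \<open>i \<in> {..a+b}\<close> by (cases "i < a"; cases "i = a") auto
  qed
  also have "\<dots> = coeff A a * coeff B b" by (simp add: sum.delta)
  finally show ?thesis .
qed

definition Kset :: "nat \<Rightarrow> nat \<Rightarrow> nat \<Rightarrow> nat \<Rightarrow> 'a::comm_ring_1 poly \<Rightarrow> 'a poly set" where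
  "Kset k L m n V = {y \<in> pl k. \<forall>a<k. coeff (rv (k+m) y * V) (n + 2*m - a) = 0}"

lemma Kset_diff:
  assumes "y1 \<in> Kset k L m n V" "y2 \<in> Kset k L m n V"
  shows "y1 - y2 \<in> Kset k L m n V"
  using assms by (auto simp: Kset_def pl_diff rv_diff left_diff_distrib)

lemma Kset_zero:
  fixes V :: "'a::field poly"
  assumes V0: "V \<noteq> 0" and dV: "degree V \<le> 2*(L+m)" and pal: "rv (2*(L+m)) V = V"
    and n: "n = k + L"
    and z: "z \<in> Kset k L m n V" and zb: "\<forall>b\<ge>k - (L+m). coeff z b = 0"
  shows "z = 0"
proof (rule ccontr)
  assume z0: "z \<noteq> 0"
  define v0 where "v0 = (LEAST i. coeff V i \<noteq> 0)"
  have ex: "\<exists>i. coeff V i \<noteq> 0" using V0 leading_coeff_0_iff by blast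
  have v0nz: "coeff V v0 \<noteq> 0" unfolding v0_def by (rule LeastI_ex[OF ex])
  have v0low: "\<forall>i<v0. coeff V i = 0" unfolding v0_def using not_less_Least by blast
  have "v0 \<le> degree V" using v0nz le_degree by blast
  hence v0N: "v0 \<le> 2*(L+m)" using dV by simp
  have "coeff V (2*(L+m) - v0) = coeff (rv (2*(L+m)) V) v0" using v0N by (simp add: coeff_rv)
  also have "\<dots> \<noteq> 0" using pal v0nz by simp
  finally have "\<not> (2*(L+m) - v0 < v0)" using v0low by blast
  hence v0le: "v0 \<le> L + m" by simp
  define b0 where "b0 = degree z"
  have zb0: "coeff z b0 \<noteq> 0" using z0 by (simp add: b0_def)
  have b0lt: "b0 < k - (L+m)" using zb zb0 not_le by blast
  define l0 where "l0 = k + m - b0"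
  have rlow: "\<forall>i<l0. coeff (rv (k+m) z) i = 0"
    by (auto simp: coeff_rv l0_def b0_def coeff_eq_0)
  have rl0: "coeff (rv (k+m) z) l0 = coeff z b0"
    using b0lt by (simp add: coeff_rv l0_def)
  define a where "a = L + m - v0 + b0"
  have a: "a < k" using b0lt v0le by (simp add: a_def)
  have idx: "n + 2*m - a = l0 + v0" using b0lt v0le by (simp add: a_def l0_def n)
  have "coeff (rv (k+m) z * V) (n + 2*m - a) = 0" using z a by (simp add: Kset_def)
  moreover have "coeff (rv (k+m) z * V) (n + 2*m - a) = coeff z b0 * coeff V v0"
    unfolding idx by (subst coeff_mult_low[OF rlow v0low]) (simp add: rl0)
  ultimately show False using zb0 v0nz by simp
qed

lemma card_Kset:
  fixes V :: "'a::{field,finite} poly"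
  assumes V0: "V \<noteq> 0" and dV: "degree V \<le> 2*(L+m)" and pal: "rv (2*(L+m)) V = V"
    and n: "n = k + L"
  shows "card (Kset k L m n V) \<le> CARD('a)^(L+m)"
proof -
  define I where "I = {k - (L+m)..<k}"
  let ?f = "\<lambda>y::'a poly. restrict (coeff y) I"
  have inj: "inj_on ?f (Kset k L m n V)"
  proof (rule inj_onI)
    fix y1 y2 assume y: "y1 \<in> Kset k L m n V" "y2 \<in> Kset k L m n V" and eq: "?f y1 = ?f y2"
    have "y1 - y2 \<in> Kset k L m n V" using y by (rule Kset_diff)
    moreover have "\<forall>b\<ge>k - (L+m). coeff (y1 - y2) b = 0"
    proof (intro allI impI)
      fix b assume b: "b \<ge> k - (L+m)"
      show "coeff (y1 - y2) b = 0"
      proof (cases "b < k")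
        case True
        hence "b \<in> I" using b by (simp add: I_def)
        thus ?thesis using fun_cong[OF eq, of b] by simp
      next
        case False
        thus ?thesis using y by (simp add: Kset_def pl_def)
      qed
    qed
    ultimately have "y1 - y2 = 0" using Kset_zero[OF V0 dV pal n] by blast
    thus "y1 = y2" by simp
  qed
  have sub: "?f ` Kset k L m n V \<subseteq> PiE I (\<lambda>_. UNIV)" by auto
  have "card (Kset k L m n V) = card (?f ` Kset k L m n V)" using inj by (simp add: card_image)
  also have "\<dots> \<le> card (PiE I (\<lambda>_. (UNIV :: 'a set)))"
    by (rule card_mono[OF _ sub]) (simp add: I_def finite_PiE)
  also have "\<dots> = CARD('a) ^ card I" by (simp add: card_PiE I_def)
  also have "\<dots> \<le> CARD('a)^(L+m)"
    by (rule power_increasing) (auto simp: I_def)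
  finally show ?thesis .
qed

definition Hh :: "nat \<Rightarrow> 'a::comm_semiring_1 poly \<Rightarrow> 'a poly" where
  "Hh L h = h * rv L h"

lemma degree_Hh: "degree h \<le> L \<Longrightarrow> degree (Hh L h) \<le> 2*L"
  unfolding Hh_def using degree_mult_le[of h "rv L h"] degree_rv[of L h] by linarith

lemma rv_Hh: "degree (h::'a::idom poly) \<le> L \<Longrightarrow> rv (2*L) (Hh L h) = Hh L h"
proof -
  assume dh: "degree h \<le> L"
  have "rv (L+L) (h * rv L h) = rv L h * rv L (rv L h)" by (rule rv_mult[OF dh degree_rv])
  also have "\<dots> = h * rv L h" using dh by (simp add: rv_rv mult.commute)
  finally show ?thesis unfolding Hh_def mult_2 .
qed

lemma V_props:
  fixes h1 h2 :: "'a::field poly" and m :: nat and c :: "nat \<Rightarrow> 'a"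
  assumes "degree h1 \<le> L" "degree h2 \<le> L"
  defines "V \<equiv> (Hh L h1 - Hh L h2) * Cp m c"
  shows "degree V \<le> 2*(L+m)" "rv (2*(L+m)) V = V"
proof -
  have dG: "degree (Hh L h1 - Hh L h2) \<le> 2*L"
    using degree_Hh[OF assms(1)] degree_Hh[OF assms(2)] degree_diff_le by blast
  have "degree V \<le> 2*L + 2*m"
    unfolding V_def using degree_mult_le[of "Hh L h1 - Hh L h2" "Cp m c"] dG degree_Cp[of m c] by linarith
  thus "degree V \<le> 2*(L+m)" by (simp add: distrib_left)
  have "rv (2*L + 2*m) V = rv (2*L) (Hh L h1 - Hh L h2) * rv (2*m) (Cp m c)"
    unfolding V_def by (rule rv_mult[OF dG degree_Cp])
  also have "\<dots> = V" by (simp add: V_def rv_diff rv_Hh assms rv_Cp)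
  finally show "rv (2*(L+m)) V = V" by (simp add: distrib_left)
qed

definition Lam :: "nat \<Rightarrow> (nat \<Rightarrow> 'a::comm_ring_1) \<Rightarrow> nat \<Rightarrow> 'a poly \<Rightarrow> 'a poly \<Rightarrow> 'a poly \<Rightarrow> 'a poly \<Rightarrow> 'a" where
  "Lam m c n h1 h2 y x = (bil m c n (x*h1) (y*h1) + bil m c n (y*h1) (x*h1))
                       - (bil m c n (x*h2) (y*h2) + bil m c n (y*h2) (x*h2))"

lemma Lam_formula:
  fixes h1 h2 :: "'a::field poly"
  assumes h: "degree h1 \<le> L" "degree h2 \<le> L" and n: "n = k + L"
    and x: "x \<in> pl k" and y: "y \<in> pl k"
  shows "Lam m c n h1 h2 y x = coeff (Cp m c * (x * rv (k+m) y * (Hh L h1 - Hh L h2))) (n + 2*m)"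
proof -
  have dx: "degree x \<le> k" using x by (rule pl_degree_le)
  have dy: "degree y \<le> k" using y by (rule pl_degree_le)
  have one: "bil m c n (x*h) (y*h) + bil m c n (y*h) (x*h) = coeff (Cp m c * (x * rv (k+m) y * Hh L h)) (n + 2*m)"
    if dh: "degree h \<le> L" for h :: "'a poly"
  proof -
    have d1: "degree (x*h) \<le> n" using degree_mult_le[of x h] dx dh n by linarith
    have d2: "degree (y*h) \<le> n" using degree_mult_le[of y h] dy dh n by linarith
    have "rv (n+m) (y*h) = rv (k+m) y * rv L h"
      using rv_mult[of y "k+m" h L] dy dh n by (simp add: add.commute add.left_commute)
    thus ?thesis using E_lemma[OF d1 d2, of m c] by (simp add: Hh_def ac_simps)
  qed
  show ?thesis
    unfolding Lam_def one[OF h(1)] one[OF h(2)]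
    by (simp add: right_diff_distrib coeff_diff)
qed

lemma Lam_monom:
  fixes h1 h2 :: "'a::field poly"
  assumes h: "degree h1 \<le> L" "degree h2 \<le> L" and n: "n = k + L"
    and a: "a < k" and y: "y \<in> pl k"
  shows "Lam m c n h1 h2 y (monom 1 a) = coeff (rv (k+m) y * ((Hh L h1 - Hh L h2) * Cp m c)) (n + 2*m - a)"
proof -
  have mp: "monom 1 a \<in> pl k" using a by (auto simp: pl_def coeff_monom)
  have eq: "Cp m c * (monom 1 a * rv (k+m) y * (Hh L h1 - Hh L h2)) = monom 1 a * (rv (k+m) y * ((Hh L h1 - Hh L h2) * Cp m c))"
    by (simp add: ac_simps)
  have "Lam m c n h1 h2 y (monom 1 a) = coeff (Cp m c * (monom 1 a * rv (k+m) y * (Hh L h1 - Hh L h2))) (n + 2*m)"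
    by (rule Lam_formula[OF h n mp y])
  also have "\<dots> = coeff (monom 1 a * (rv (k+m) y * ((Hh L h1 - Hh L h2) * Cp m c))) (n + 2*m)"
    by (simp only: eq)
  also have "\<dots> = coeff (rv (k+m) y * ((Hh L h1 - Hh L h2) * Cp m c)) (n + 2*m - a)"
    using a n by (simp add: coeff_monom_mult)
  finally show ?thesis .
qed



lemma monics_nz: "g \<in> monics k \<Longrightarrow> (g::'a::field poly) \<noteq> 0"
  by (auto simp: monics_def)

lemma degree_monics_mult: "g \<in> monics k \<Longrightarrow> h \<in> monics L \<Longrightarrow> degree (g * (h::'a::field poly)) = k + L"
  by (simp add: degree_mult_eq monics_nz) (simp add: monics_def)

lemma monics_degree: "h \<in> monics L \<Longrightarrow> degree h = L" by (simp add: monics_def)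

lemma mk_monics: "(x::'a::field poly) \<in> pl k \<Longrightarrow> monom 1 k + x \<in> monics k"
  by (auto simp: monics_eq)

lemma Lam_add: "Lam m c n h1 h2 y (x1 + x2) = Lam m c n h1 h2 y x1 + Lam m c n h1 h2 y x2"
  by (simp add: Lam_def distrib_right bil_add1 bil_add2 algebra_simps)

lemma Lam_smult: "Lam m c n h1 h2 y (smult a x) = a * Lam m c n h1 h2 y (x::'a::field poly)"
  by (simp add: Lam_def bil_smult1 bil_smult2 algebra_simps)

lemma U_bound:
  fixes h1 h2 :: "'a::{field,finite} poly" and \<psi> :: "'a \<Rightarrow> complex"
  assumes psi: "nontrivial_add_char \<psi>"
    and h1: "h1 \<in> monics L" and h2: "h2 \<in> monics L" and n: "n = k + L"
  shows "(norm (\<Sum>g\<in>monics k. \<psi> (QA m c lf (g*h1) - QA m c lf (g*h2))))^2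
         \<le> real (CARD('a)^k) * real (card {y\<in>pl k. \<forall>x\<in>pl k. Lam m c n h1 h2 y x = 0})"
proof -
  have ac: "add_char \<psi>" using psi by (simp add: nontrivial_add_char_def)
  define Ker where "Ker = {y\<in>pl k. \<forall>x\<in>pl k. Lam m c n h1 h2 y x = 0}"
  define Qn where "Qn = (\<lambda>z. bil m c n z z + lin lf n z)"
  define \<Phi> where "\<Phi> = (\<lambda>x. Qn ((monom 1 k + x) * h1) - Qn ((monom 1 k + x) * h2))"
  define \<kappa>1 where "\<kappa>1 = (\<lambda>h y. bil m c n (monom 1 k * h) (y*h) + bil m c n (y*h) (monom 1 k * h)
                             + bil m c n (y*h) (y*h) + lin lf n (y*h))"
  define \<kappa> where "\<kappa> = (\<lambda>y. \<kappa>1 h1 y - \<kappa>1 h2 y)"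
  define U where "U = (\<Sum>g\<in>monics k. \<psi> (QA m c lf (g*h1) - QA m c lf (g*h2)))"
  have U: "U = (\<Sum>x\<in>pl k. \<psi> (\<Phi> x))"
    unfolding U_def sum_monics
  proof (intro sum.cong refl)
    fix x :: "'a poly" assume x: "x \<in> pl k"
    have "degree ((monom 1 k + x) * h1) = n" "degree ((monom 1 k + x) * h2) = n"
      using degree_monics_mult[OF mk_monics[OF x] h1] degree_monics_mult[OF mk_monics[OF x] h2] n by auto
    thus "\<psi> (QA m c lf ((monom 1 k + x) * h1) - QA m c lf ((monom 1 k + x) * h2)) = \<psi> (\<Phi> x)"
      by (simp add: QA_eq \<Phi>_def Qn_def)
  qed
  have shift1: "Qn ((monom 1 k + (x + y)) * h) - Qn ((monom 1 k + x) * h)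
      = (bil m c n (x*h) (y*h) + bil m c n (y*h) (x*h)) + \<kappa>1 h y" for x y h
  proof -
    have e1: "(monom 1 k + (x + y)) * h = monom 1 k * h + x * h + y * h" by (simp add: algebra_simps)
    have e2: "(monom 1 k + x) * h = monom 1 k * h + x * h" by (simp add: algebra_simps)
    show ?thesis unfolding e1 e2 Qn_def \<kappa>1_def
      by (rule Q_shift[where B="bil m c n" and l="lin lf n"]) (simp_all add: bil_add1 bil_add2 lin_add)
  qed
  have shift: "\<Phi> (x + y) - \<Phi> x = Lam m c n h1 h2 y x + \<kappa> y" for x y
    unfolding \<Phi>_def \<kappa>_def Lam_def
    using shift1[of x y h1] shift1[of x y h2] by (simp add: algebra_simps)
  have inner: "(\<Sum>x\<in>pl k. \<psi> (Lam m c n h1 h2 y x)) = (if y \<in> Ker then of_nat (CARD('a)^k) else 0)"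
    if y: "y \<in> pl k" for y
  proof (cases "y \<in> Ker")
    case True
    have one: "\<psi> (Lam m c n h1 h2 y x) = 1" if "x \<in> pl k" for x
      using that True by (auto simp: Ker_def char_0[OF ac])
    have "(\<Sum>x\<in>pl k. \<psi> (Lam m c n h1 h2 y x)) = (\<Sum>x\<in>(pl k :: 'a poly set). 1)"
      using one by simp
    thus ?thesis using True by (simp add: card_pl)
  next
    case False
    then obtain e where e: "e \<in> pl k" "Lam m c n h1 h2 y e \<noteq> 0" using y by (auto simp: Ker_def)
    show ?thesis using False
      by (simp add: char_sum_zero[OF psi Lam_add Lam_smult e])
  qed
  have "of_real ((norm U)^2) = U * cnj U" by (rule complex_norm_square)
  also have "\<dots> = (\<Sum>x'\<in>pl k. \<Sum>x\<in>pl k. \<psi> (\<Phi> x) * cnj (\<psi> (\<Phi> x')))"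
    unfolding U sum_distrib_right cnj_sum sum_distrib_left
    by simp
  also have "\<dots> = (\<Sum>x'\<in>pl k. \<Sum>x\<in>pl k. \<psi> (\<Phi> x - \<Phi> x'))"
    by (simp add: char_diff[OF ac])
  also have "\<dots> = (\<Sum>x'\<in>pl k. \<Sum>y\<in>pl k. \<psi> (\<Phi> (x' + y) - \<Phi> x'))"
  proof (rule sum.cong[OF refl])
    fix x' :: "'a poly" assume x': "x' \<in> pl k"
    show "(\<Sum>x\<in>pl k. \<psi> (\<Phi> x - \<Phi> x')) = (\<Sum>y\<in>pl k. \<psi> (\<Phi> (x' + y) - \<Phi> x'))"
      by (rule sum.reindex_bij_witness[of _ "\<lambda>y. x' + y" "\<lambda>x. x - x'"]) (auto simp: x' pl_add pl_diff)
  qed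
  also have "\<dots> = (\<Sum>y\<in>pl k. \<psi> (\<kappa> y) * (\<Sum>x\<in>pl k. \<psi> (Lam m c n h1 h2 y x)))"
    unfolding shift sum_distrib_left
    by (subst sum.swap) (simp add: char_add[OF ac] mult.commute)
  also have "\<dots> = (\<Sum>y\<in>pl k. \<psi> (\<kappa> y) * (if y \<in> Ker then of_nat (CARD('a)^k) else 0))"
    by (intro sum.cong refl) (simp add: inner)
  finally have eq: "of_real ((norm U)^2) = (\<Sum>y\<in>pl k. \<psi> (\<kappa> y) * (if y \<in> Ker then of_nat (CARD('a)^k) else 0))" .
  have "(norm U)^2 = norm (of_real ((norm U)^2) :: complex)" by (simp only: norm_of_real abs_power2 abs_norm_cancel)
  also have "\<dots> \<le> (\<Sum>y\<in>pl k. norm (\<psi> (\<kappa> y) * (if y \<in> Ker then of_nat (CARD('a)^k) else 0 :: complex)))"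
    unfolding eq by (rule norm_sum)
  also have "\<dots> = (\<Sum>y\<in>pl k. if y \<in> Ker then real (CARD('a)^k) else 0)"
    by (intro sum.cong refl) (simp add: norm_mult char_norm[OF ac] norm_power)
  also have "\<dots> = (\<Sum>y\<in>{y\<in>pl k. y \<in> Ker}. real (CARD('a)^k))"
    by (subst sum.inter_filter) (auto simp: finite_pl)
  also have "{y\<in>pl k. y \<in> Ker} = Ker" by (auto simp: Ker_def)
  finally show ?thesis by (simp add: U_def Ker_def mult.commute)
qed

lemma U_trivial:
  fixes \<psi> :: "'a::{field,finite} \<Rightarrow> complex" and F :: "'a poly \<Rightarrow> 'a"
  assumes "add_char \<psi>"
  shows "norm (\<Sum>g\<in>monics k. \<psi> (F g)) \<le> real (CARD('a)^k)"
proof -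
  have "norm (\<Sum>g\<in>monics k. \<psi> (F g)) \<le> (\<Sum>g\<in>(monics k::'a poly set). norm (\<psi> (F g)))" by (rule norm_sum)
  also have "\<dots> = real (card (monics k :: 'a poly set))" using assms by (simp add: char_norm)
  finally show ?thesis by (simp add: card_monics)
qed

lemma Ker_sub:
  fixes h1 h2 :: "'a::field poly"
  assumes h: "degree h1 \<le> L" "degree h2 \<le> L" and n: "n = k + L"
  shows "{y\<in>pl k. \<forall>x\<in>pl k. Lam m c n h1 h2 y x = 0} \<subseteq> Kset k L m n ((Hh L h1 - Hh L h2) * Cp m c)"
proof
  fix y assume y: "y \<in> {y\<in>pl k. \<forall>x\<in>pl k. Lam m c n h1 h2 y x = 0}"
  have yk: "y \<in> pl k" using y by simp
  have "coeff (rv (k+m) y * ((Hh L h1 - Hh L h2) * Cp m c)) (n + 2*m - a) = 0" if a: "a < k" for a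
  proof -
    have "monom 1 a \<in> pl k" using a by (auto simp: pl_def coeff_monom)
    hence "Lam m c n h1 h2 y (monom 1 a) = 0" using y by auto
    thus ?thesis using Lam_monom[OF h n a yk] by simp
  qed
  thus "y \<in> Kset k L m n ((Hh L h1 - Hh L h2) * Cp m c)"
    using yk by (auto simp: Kset_def)
qed



context
begin

interpretation fp:
  normalization_euclidean_semiring_multiplicative where zero = "0 :: 'a :: field poly"
    and one = 1 and plus = plus and minus = minus
    and times = times
    and normalize = "\<lambda>p. smult (inverse (lead_coeff p)) p"
    and unit_factor = "\<lambda>p. [:lead_coeff p:]"
    and euclidean_size = "\<lambda>p. if p = 0 then 0 else 2 ^ degree p"
    and divide = divide and modulo = modulo
  rewrites "dvd.dvd (times :: 'a poly \<Rightarrow> _) = Rings.dvd"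
    and "comm_monoid_mult.prod_mset times 1 = prod_mset"
    and "comm_semiring_1.irreducible times 1 0 = irreducible"
    and "comm_semiring_1.prime_elem times 1 0 = prime_elem"
proof -
  show "dvd.dvd (times :: 'a poly \<Rightarrow> _) = Rings.dvd"
    by (simp add: dvd_dict)
  show "comm_monoid_mult.prod_mset times 1 = prod_mset"
    by (simp add: prod_mset_dict)
  show "comm_semiring_1.irreducible times 1 0 = irreducible"
    by (simp add: irreducible_dict)
  show "comm_semiring_1.prime_elem times 1 0 = prime_elem"
    by (simp add: prime_elem_dict)
  show "class.normalization_euclidean_semiring_multiplicative divide plus minus (0 :: 'a poly) times 1
    modulo (\<lambda>p. if p = 0 then 0 else 2 ^ degree p)
    (\<lambda>p. [:lead_coeff p:]) (\<lambda>p. smult (inverse (lead_coeff p)) p)"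
  proof (standard, fold dvd_dict)
    fix p :: "'a poly"
    show "[:lead_coeff p:] * smult (inverse (lead_coeff p)) p = p"
      by (cases "p = 0") simp_all
  next
    fix p :: "'a poly" assume "is_unit p"
    then show "[:lead_coeff p:] = p"
      by (elim is_unit_polyE) (auto simp: monom_0 one_poly_def field_simps)
  next
    fix p :: "'a poly" assume "p \<noteq> 0"
    then show "is_unit [:lead_coeff p:]"
      by (simp add: is_unit_pCons_iff)
  next
    fix a b :: "'a poly" assume "is_unit a"
    thus "[:lead_coeff (a * b):] = a * [:lead_coeff b:]"
      by (auto elim!: is_unit_polyE)
  qed (auto simp: lead_coeff_mult Rings.div_mult_mod_eq intro!: degree_mod_less' degree_mult_right_le)
qed

lemma card_submsets:
  "card {N. N \<subseteq># M} \<le> (\<Prod>x\<in>set_mset M. count M x + 1) \<and> finite {N. N \<subseteq># M}"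
proof -
  let ?f = "\<lambda>N. restrict (count N) (set_mset M)"
  have inj: "inj_on ?f {N. N \<subseteq># M}"
  proof (rule inj_onI)
    fix N1 N2 assume N: "N1 \<in> {N. N \<subseteq># M}" "N2 \<in> {N. N \<subseteq># M}" and eq: "?f N1 = ?f N2"
    show "N1 = N2"
    proof (rule multiset_eqI)
      fix x show "count N1 x = count N2 x"
      proof (cases "x \<in># M")
        case True thus ?thesis using fun_cong[OF eq, of x] by simp
      next
        case False
        hence "count N1 x = 0" "count N2 x = 0" using N
          by (auto simp: mset_subset_eq_count not_in_iff dest: mset_subset_eq_count[of _ M x])
        thus ?thesis by simp
      qed
    qed
  qed
  have sub: "?f ` {N. N \<subseteq># M} \<subseteq> PiE (set_mset M) (\<lambda>x. {0..count M x})"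
    by (auto simp: mset_subset_eq_count)
  have "card {N. N \<subseteq># M} \<le> card (PiE (set_mset M) (\<lambda>x. {0..count M x}))"
    by (rule card_inj_on_le[OF inj sub]) (simp add: finite_PiE)
  also have "\<dots> = (\<Prod>x\<in>set_mset M. count M x + 1)" by (simp add: card_PiE)
  finally show ?thesis
    using finite_imageD[OF finite_subset[OF sub finite_PiE] inj] by simp
qed

lemma degree_prod_mset_count:
  fixes M :: "'a::idom poly multiset"
  assumes "0 \<notin># M"
  shows "degree (prod_mset M) = (\<Sum>p\<in>set_mset M. count M p * degree p)"
proof -
  have "degree (prod_mset M) = degree (\<Prod>x\<in>set_mset M. x ^ count M x)"
    by (simp add: prod_mset_multiplicity)
  also have "\<dots> = (\<Sum>x\<in>set_mset M. degree (x ^ count M x))"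
    using assms by (intro degree_prod_sum_eq) auto
  also have "\<dots> = (\<Sum>p\<in>set_mset M. count M p * degree p)"
  proof (intro sum.cong refl)
    fix x assume "x \<in> set_mset M"
    hence "x \<noteq> 0" using assms by auto
    thus "degree (x ^ count M x) = count M x * degree x" by (simp add: degree_power_eq)
  qed
  finally show ?thesis .
qed

lemma divisor_bound:
  fixes F :: "'a::{field,finite} poly"
  assumes F0: "F \<noteq> 0" and dF: "degree F \<le> N"
  shows "card {d. d dvd F \<and> lead_coeff d = 1} \<le> (N+1)^(CARD('a)^(D+1)) * 2^(N div (D+1))"
proof -
  define S where "S = {d. d dvd F \<and> lead_coeff d = 1}"
  define M where "M = fp.prime_factorization F"
  define A where "A = set_mset M"
  have Mprime: "prime_elem p" if "p \<in># M" for p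
    using that unfolding M_def by (rule field_poly_in_prime_factorization_imp_prime)
  have Mdeg: "degree p \<ge> 1" if "p \<in># M" for p
  proof -
    have "p \<noteq> 0" "\<not> is_unit p" using Mprime[OF that] by (auto simp: prime_elem_def)
    thus ?thesis using is_unit_iff_degree by (metis less_one not_le)
  qed
  have M0: "0 \<notin># M" using Mprime by fastforce
  have prodM: "prod_mset M = smult (inverse (lead_coeff F)) F"
    unfolding M_def using F0 by (rule fp.prod_mset_prime_factorization)
  have degF: "degree F = (\<Sum>p\<in>A. count M p * degree p)"
    using degree_prod_mset_count[OF M0] prodM F0 by (simp add: A_def)
  have finA: "finite A" by (simp add: A_def)
  have inj: "inj_on fp.prime_factorization S"
  proof (rule inj_onI)
    fix d1 d2 assume d: "d1 \<in> S" "d2 \<in> S" and eq: "fp.prime_factorization d1 = fp.prime_factorization d2"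
    have nz: "d1 \<noteq> 0" "d2 \<noteq> 0" using d by (auto simp: S_def)
    have "smult (inverse (lead_coeff d1)) d1 = smult (inverse (lead_coeff d2)) d2"
      using fp.prod_mset_prime_factorization[OF nz(1)] fp.prod_mset_prime_factorization[OF nz(2)] eq by simp
    thus "d1 = d2" using d by (simp add: S_def)
  qed
  have sub: "fp.prime_factorization ` S \<subseteq> {N. N \<subseteq># M}"
  proof
    fix N' assume "N' \<in> fp.prime_factorization ` S"
    then obtain d where d: "d \<in> S" "N' = fp.prime_factorization d" by auto
    have "d \<noteq> 0" using d by (auto simp: S_def)
    thus "N' \<in> {N. N \<subseteq># M}"
      using d F0 by (auto simp: M_def S_def fp.prime_factorization_subset_iff_dvd)
  qed
  have "card S \<le> card {N. N \<subseteq># M}"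
    by (rule card_inj_on_le[OF inj sub]) (use card_submsets[of M] in blast)
  also have "\<dots> \<le> (\<Prod>p\<in>A. count M p + 1)" unfolding A_def using card_submsets[of M] by blast
  also have "\<dots> = (\<Prod>p\<in>A - {p\<in>A. degree p \<le> D}. count M p + 1) * (\<Prod>p\<in>{p\<in>A. degree p \<le> D}. count M p + 1)"
    using finA by (intro prod.subset_diff) auto
  also have "\<dots> \<le> 2^(N div (D+1)) * (N+1)^(CARD('a)^(D+1))"
  proof (rule mult_le_mono)
    define Ab where "Ab = A - {p\<in>A. degree p \<le> D}"
    have "(\<Prod>p\<in>Ab. count M p + 1) \<le> (\<Prod>p\<in>Ab. 2 ^ count M p)"
      by (intro prod_mono) (auto simp: Suc_leI less_exp)
    also have "\<dots> = 2 ^ (\<Sum>p\<in>Ab. count M p)" by (simp add: power_sum)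
    also have "\<dots> \<le> 2 ^ (N div (D+1))"
    proof (rule power_increasing)
      have "(\<Sum>p\<in>Ab. count M p) * (D+1) = (\<Sum>p\<in>Ab. count M p * (D+1))" by (rule sum_distrib_right)
      also have "\<dots> \<le> (\<Sum>p\<in>Ab. count M p * degree p)"
        by (intro sum_mono mult_le_mono) (auto simp: Ab_def)
      also have "\<dots> \<le> (\<Sum>p\<in>A. count M p * degree p)"
        using finA by (intro sum_mono2) (auto simp: Ab_def)
      also have "\<dots> \<le> N" using degF dF by simp
      finally show "(\<Sum>p\<in>Ab. count M p) \<le> N div (D+1)"
        by (simp add: less_eq_div_iff_mult_less_eq)
    qed simp
    finally show "(\<Prod>p\<in>A - {p\<in>A. degree p \<le> D}. count M p + 1) \<le> 2^(N div (D+1))" by (simp add: Ab_def)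
  next
    define As where "As = {p\<in>A. degree p \<le> D}"
    have cN: "count M p \<le> N" if "p \<in> A" for p
    proof -
      have "count M p \<le> count M p * degree p" using Mdeg[of p] that by (simp add: A_def)
      also have "\<dots> \<le> (\<Sum>p\<in>A. count M p * degree p)" using finA that by (intro member_le_sum) auto
      finally show ?thesis using degF dF by simp
    qed
    have "(\<Prod>p\<in>As. count M p + 1) \<le> (\<Prod>p\<in>As. N + 1)"
      using cN by (intro prod_mono) (auto simp: As_def)
    also have "\<dots> = (N+1)^card As" by simp
    also have "\<dots> \<le> (N+1)^(CARD('a)^(D+1))"
    proof (rule power_increasing)
      have "As \<subseteq> pl (Suc D)" by (auto simp: As_def intro: degree_le_pl)
      hence "card As \<le> card (pl (Suc D) :: 'a poly set)" by (intro card_mono finite_pl)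
      thus "card As \<le> CARD('a)^(D+1)" by (simp add: card_pl)
    qed simp
    finally show "(\<Prod>p\<in>{p\<in>A. degree p \<le> D}. count M p + 1) \<le> (N+1)^(CARD('a)^(D+1))"
      by (simp add: As_def)
  qed
  finally show ?thesis by (simp add: S_def mult.commute)
qed

end



definition divs :: "'a::field poly \<Rightarrow> 'a poly set" where
  "divs F = {d. d dvd F \<and> lead_coeff d = 1}"

definition dvmax :: "'a::{field,finite} itself \<Rightarrow> nat \<Rightarrow> nat" where
  "dvmax _ N = Max ((\<lambda>F::'a poly. card (divs F)) ` {F. F \<noteq> 0 \<and> degree F \<le> N})"

lemma finite_divs: "F \<noteq> 0 \<Longrightarrow> finite (divs (F::'a::{field,finite} poly))"
proof -
  assume F: "F \<noteq> 0"
  have "divs F \<subseteq> pl (Suc (degree F))"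
  proof
    fix d assume "d \<in> divs F"
    hence "d dvd F" "d \<noteq> 0" by (auto simp: divs_def)
    hence "degree d \<le> degree F" using F by (simp add: dvd_imp_degree)
    thus "d \<in> pl (Suc (degree F))" by (rule degree_le_pl)
  qed
  thus ?thesis using finite_pl finite_subset by blast
qed

lemma finite_polys_deg: "finite {F::'a::{field,finite} poly. F \<noteq> 0 \<and> degree F \<le> N}"
  by (rule finite_subset[OF _ finite_pl[of "Suc N"]]) (auto intro: degree_le_pl)

lemma dvmax_ge:
  fixes F :: "'a::{field,finite} poly"
  assumes "F \<noteq> 0" "degree F \<le> N"
  shows "card (divs F) \<le> dvmax TYPE('a) N"
  unfolding dvmax_def using assms by (intro Max_ge finite_imageI finite_polys_deg) auto

lemma dvmax_pos: "dvmax TYPE('a::{field,finite}) N \<ge> 1"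
proof -
  have "divs (1::'a poly) = {1}"
  proof (intro set_eqI iffI)
    fix d :: "'a poly" assume "d \<in> divs 1"
    hence d: "d dvd 1" "lead_coeff d = 1" by (auto simp: divs_def)
    hence "d \<noteq> 0" by auto
    hence "degree d = 0" using d is_unit_iff_degree by blast
    hence "d = [:coeff d 0:]" by (rule degree_0_id[symmetric])
    also have "coeff d 0 = 1" using d \<open>degree d = 0\<close> by simp
    finally show "d \<in> {1}" by (simp add: one_pCons)
  qed (auto simp: divs_def)
  hence "card (divs (1::'a poly)) = 1" by simp
  thus ?thesis using dvmax_ge[of "1::'a poly" N] by simp
qed

lemma dvmax_le:
  "dvmax TYPE('a::{field,finite}) N \<le> (N+1)^(CARD('a)^(D+1)) * 2^(N div (D+1))"
proof -
  let ?S = "(\<lambda>F::'a poly. card (divs F)) ` {F. F \<noteq> 0 \<and> degree F \<le> N}"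
  have fin: "finite ?S" by (intro finite_imageI finite_polys_deg)
  have ne: "?S \<noteq> {}" by (auto intro!: exI[of _ "1::'a poly"])
  have "\<forall>x\<in>?S. x \<le> (N+1)^(CARD('a)^(D+1)) * 2^(N div (D+1))"
  proof
    fix x assume "x \<in> ?S"
    then obtain F :: "'a poly" where F: "F \<noteq> 0" "degree F \<le> N" "x = card (divs F)" by auto
    show "x \<le> (N+1)^(CARD('a)^(D+1)) * 2^(N div (D+1))"
      unfolding F(3) divs_def by (rule divisor_bound[OF F(1,2)])
  qed
  thus ?thesis unfolding dvmax_def by (subst Max_le_iff[OF fin ne]) blast
qed

definition eps :: "'a::{field,finite} itself \<Rightarrow> nat \<Rightarrow> real" where
  "eps t n = ln (real (dvmax t (2*n))) / (2 * real n * ln (real CARD('a)))"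

lemma eps_tendsto:
  assumes q: "CARD('a::{field,finite}) \<ge> 2"
  shows "eps TYPE('a) \<longlonglongrightarrow> 0"
proof (rule LIMSEQ_I)
  fix r :: real assume r: "0 < r"
  define q where "q = real CARD('a)"
  have q2: "q \<ge> 2" using q by (simp add: q_def)
  have lq: "ln q > 0" using q2 by simp
  obtain D0 :: nat where D0: "2 * ln 2 / (r * ln q) < real D0"
    using reals_Archimedean2 by blast
  define D where "D = D0"
  have D: "2 * ln 2 / (r * ln q) < real (D+1)" using D0 by (simp add: D_def)
  have D': "ln 2 / (real (D+1) * ln q) < r / 2"
  proof -
    have pos: "r * ln q > 0" using r lq by simp
    from D have A: "2 * ln 2 < real (D+1) * (r * ln q)" using pos by (simp add: divide_less_eq)
    have pos2: "real (D+1) * ln q > 0" using lq by simp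
    have "r / 2 * (real (D+1) * ln q) = real (D+1) * (r * ln q) / 2" by simp
    hence "ln 2 < r / 2 * (real (D+1) * ln q)" using A by linarith
    thus ?thesis by (subst pos_divide_less_eq[OF pos2]) simp
  qed
  define Q where "Q = real (CARD('a)^(D+1))"
  have lim: "(\<lambda>n::nat. Q * ln (2 * real n + 1) / (2 * real n * ln q)) \<longlonglongrightarrow> 0"
  proof -
    have f: "filterlim (\<lambda>n::nat. 2 * real n + 1) at_top sequentially"
      by (rule filterlim_at_top_mono[OF filterlim_real_sequentially]) auto
    have a: "(\<lambda>n::nat. ln (2 * real n + 1) / (2 * real n + 1)) \<longlonglongrightarrow> 0"
      using filterlim_compose[OF ln_x_over_x_tendsto_0 f] by (simp add: o_def)
    have b: "(\<lambda>n::nat. 2 + inverse (real n)) \<longlonglongrightarrow> 2 + 0"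
      by (intro tendsto_add tendsto_const tendsto_inverse_0_at_top filterlim_real_sequentially)
    have "(\<lambda>n::nat. ln (2 * real n + 1) / (2 * real n + 1) * (2 + inverse (real n))) \<longlonglongrightarrow> 0 * (2 + 0)"
      by (intro tendsto_mult a b)
    moreover have "ln (2 * real n + 1) / (2 * real n + 1) * (2 + inverse (real n)) = ln (2 * real n + 1) / real n" for n :: nat
    proof (cases "n = 0")
      case False
      hence "2 + inverse (real n) = (2 * real n + 1) / real n" by (simp add: field_simps)
      thus ?thesis by (simp add: add_pos_pos)
    qed simp
    ultimately have "(\<lambda>n::nat. ln (2 * real n + 1) / real n) \<longlonglongrightarrow> 0" by simp
    hence "(\<lambda>n::nat. (Q / (2 * ln q)) * (ln (2 * real n + 1) / real n)) \<longlonglongrightarrow> (Q / (2 * ln q)) * 0"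
      by (intro tendsto_mult tendsto_const)
    thus ?thesis by (simp add: field_simps)
  qed
  then obtain n0 where n0: "\<forall>n\<ge>n0. norm (Q * ln (2 * real n + 1) / (2 * real n * ln q) - 0) < r/2"
    using r LIMSEQ_D[OF lim, of "r/2"] by auto
  show "\<exists>no. \<forall>n\<ge>no. norm (eps TYPE('a) n - 0) < r"
  proof (intro exI allI impI)
    fix n assume n: "n \<ge> Suc n0"
    hence n1: "real n \<ge> 1" by simp
    define N where "N = 2*n"
    have dpos: "real (dvmax TYPE('a) N) \<ge> 1" using dvmax_pos by simp
    have "real (dvmax TYPE('a) N) \<le> real ((N+1)^(CARD('a)^(D+1)) * 2^(N div (D+1)))"
      using dvmax_le by (simp only: of_nat_le_iff)
    hence "ln (real (dvmax TYPE('a) N)) \<le> ln (real ((N+1)^(CARD('a)^(D+1)) * 2^(N div (D+1))))"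
      using dpos by (intro ln_mono) auto
    also have "\<dots> = Q * ln (real N + 1) + real (N div (D+1)) * ln 2"
      by (simp add: ln_mult ln_realpow Q_def add.commute)
    also have "\<dots> \<le> Q * ln (real N + 1) + (real N / real (D+1)) * ln 2"
      by (intro add_left_mono mult_right_mono of_nat_div_le_of_nat) auto
    finally have lnb: "ln (real (dvmax TYPE('a) N)) \<le> Q * ln (real N + 1) + (real N / real (D+1)) * ln 2" .
    have den: "2 * real n * ln q > 0" using n1 lq by simp
    have e0: "eps TYPE('a) n \<ge> 0" unfolding eps_def q_def[symmetric] N_def[symmetric]
      using dpos den by (intro divide_nonneg_pos) auto
    have "eps TYPE('a) n \<le> (Q * ln (real N + 1) + (real N / real (D+1)) * ln 2) / (2 * real n * ln q)"
      unfolding eps_def q_def[symmetric] N_def[symmetric] using lnb den by (intro divide_right_mono) auto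
    also have "\<dots> = Q * ln (2 * real n + 1) / (2 * real n * ln q) + ln 2 / (real (D+1) * ln q)"
    proof -
      have "(real N / real (D+1)) * ln 2 / (2 * real n * ln q) = ln 2 / (real (D+1) * ln q)"
        using n1 lq by (simp add: N_def)
      moreover have "real N + 1 = 2 * real n + 1" by (simp add: N_def)
      ultimately show ?thesis by (simp add: add_divide_distrib)
    qed
    also have "\<dots> < r/2 + r/2"
    proof (rule add_strict_mono)
      have "n \<ge> n0" using n by simp
      hence h: "norm (Q * ln (2 * real n + 1) / (2 * real n * ln q) - 0) < r/2" by (rule n0[rule_format])
      have "Q * ln (2 * real n + 1) / (2 * real n * ln q) \<le> norm (Q * ln (2 * real n + 1) / (2 * real n * ln q) - 0)"
        unfolding diff_zero real_norm_def by (rule abs_ge_self)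
      thus "Q * ln (2 * real n + 1) / (2 * real n * ln q) < r/2" using h by linarith
    qed (rule D')
    finally show "norm (eps TYPE('a) n - 0) < r" using e0 by simp
  qed
qed



lemma Hh_nz: "h \<in> monics L \<Longrightarrow> Hh L (h::'a::field poly) \<noteq> 0"
proof -
  assume h: "h \<in> monics L"
  from h have "degree h = L" "lead_coeff h = 1" by (auto simp: monics_def)
  hence "coeff h L = 1" by simp
  hence "coeff (rv L h) 0 = 1" by (simp add: coeff_rv)
  hence "rv L h \<noteq> 0" by auto
  thus ?thesis using monics_nz[OF h] by (simp add: Hh_def)
qed

lemma diag_count:
  fixes h1 :: "'a::{field,finite} poly"
  assumes h1: "h1 \<in> monics L" and Ln: "L \<le> n"
  shows "card {h2\<in>monics L. Hh L h2 = Hh L h1} \<le> dvmax TYPE('a) (2*n)"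
proof -
  have nz: "Hh L h1 \<noteq> 0" by (rule Hh_nz[OF h1])
  have dg: "degree (Hh L h1) \<le> 2*n"
    using degree_Hh[of h1 L] h1 Ln by (simp add: monics_def)
  have "{h2\<in>monics L. Hh L h2 = Hh L h1} \<subseteq> divs (Hh L h1)"
  proof
    fix h2 assume "h2 \<in> {h2\<in>monics L. Hh L h2 = Hh L h1}"
    hence h2: "h2 \<in> monics L" "Hh L h2 = Hh L h1" by auto
    have "h2 dvd Hh L h2" by (simp add: Hh_def)
    hence "h2 dvd Hh L h1" using h2(2) by simp
    moreover have "lead_coeff h2 = 1" using h2(1) unfolding monics_def by blast
    ultimately show "h2 \<in> divs (Hh L h1)" by (simp add: divs_def)
  qed
  hence "card {h2\<in>monics L. Hh L h2 = Hh L h1} \<le> card (divs (Hh L h1))"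
    by (intro card_mono finite_divs nz)
  also have "\<dots> \<le> dvmax TYPE('a) (2*n)" by (rule dvmax_ge[OF nz dg])
  finally show ?thesis .
qed

lemma Cp_nz:
  assumes "odd CARD('a::{field,finite})" "c m \<noteq> (0::'a)"
  shows "Cp m c \<noteq> 0"
proof -
  have "coeff (Cp m c) (2*m) \<noteq> 0"
  proof (cases "m = 0")
    case True
    have e: "coeff (Cp m c) (2*m) = c 0 + c 0" using coeff_Cp_top[of m c] True by simp
    have e2: "c 0 + c 0 = 2 * c 0" by (rule mult_2[symmetric])
    have c0: "c 0 \<noteq> 0" using assms(2) True by simp
    have "(2::'a) * c 0 \<noteq> 0" using two_ne_zero_field[OF assms(1)] c0 by (rule no_zero_divisors)
    thus ?thesis using e e2 by simp
  next
    case False thus ?thesis using assms by (simp add: coeff_Cp_top)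
  qed
  thus ?thesis by auto
qed

lemma offdiag_bound:
  fixes h1 h2 :: "'a::{field,finite} poly" and \<psi> :: "'a \<Rightarrow> complex"
  assumes psi: "nontrivial_add_char \<psi>" and odd: "odd CARD('a)" and cm: "c m \<noteq> 0"
    and h1: "h1 \<in> monics L" and h2: "h2 \<in> monics L" and n: "n = k + L"
    and ne: "Hh L h1 \<noteq> Hh L h2"
  shows "norm (\<Sum>g\<in>monics k. \<psi> (QA m c lf (g*h1) - QA m c lf (g*h2)))
          \<le> sqrt (real (CARD('a)^k) * real (CARD('a)^(L+m)))"
proof -
  define V where "V = (Hh L h1 - Hh L h2) * Cp m c"
  have d1: "degree h1 \<le> L" and d2: "degree h2 \<le> L" using h1 h2 by (auto simp: monics_def)
  have V0: "V \<noteq> 0" using ne Cp_nz[where c=c and m=m, OF odd cm] by (simp add: V_def)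
  note VP = V_props[OF d1 d2, of m c, folded V_def]
  have "card {y\<in>pl k. \<forall>x\<in>pl k. Lam m c n h1 h2 y x = 0} \<le> card (Kset k L m n V)"
  proof (rule card_mono)
    show "finite (Kset k L m n V)" by (rule finite_subset[OF _ finite_pl[of k]]) (auto simp: Kset_def)
    show "{y\<in>pl k. \<forall>x\<in>pl k. Lam m c n h1 h2 y x = 0} \<subseteq> Kset k L m n V"
      unfolding V_def by (rule Ker_sub[OF d1 d2 n])
  qed
  also have "\<dots> \<le> CARD('a)^(L+m)" by (rule card_Kset[OF V0 VP n])
  finally have ck: "card {y\<in>pl k. \<forall>x\<in>pl k. Lam m c n h1 h2 y x = 0} \<le> CARD('a)^(L+m)" .
  have "(norm (\<Sum>g\<in>monics k. \<psi> (QA m c lf (g*h1) - QA m c lf (g*h2))))^2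
         \<le> real (CARD('a)^k) * real (card {y\<in>pl k. \<forall>x\<in>pl k. Lam m c n h1 h2 y x = 0})"
    by (rule U_bound[OF psi h1 h2 n])
  also have "\<dots> \<le> real (CARD('a)^k) * real (CARD('a)^(L+m))"
    using ck by (intro mult_left_mono) auto
  finally show ?thesis by (rule real_le_rsqrt)
qed



lemma T_sq:
  fixes \<psi> :: "'a::{field,finite} \<Rightarrow> complex" and lf :: "nat \<Rightarrow> nat \<Rightarrow> 'a"
  assumes psi: "nontrivial_add_char \<psi>"
  shows "(Tsum m c lf \<psi> n k)^2 \<le> real (CARD('a)^k) *
     (\<Sum>h1\<in>monics (n-k). \<Sum>h2\<in>monics (n-k). norm (\<Sum>g\<in>monics k. \<psi> (QA m c lf (g*h1) - QA m c lf (g*h2))))"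
proof -
  have ac: "add_char \<psi>" using psi by (simp add: nontrivial_add_char_def)
  define L where "L = n - k"
  define S where "S = (\<lambda>g. \<Sum>h\<in>monics L. \<psi> (QA m c lf (g * h)))"
  have T: "Tsum m c lf \<psi> n k = (\<Sum>g\<in>monics k. norm (S g))"
    by (simp add: Tsum_def S_def L_def)
  have cs: "(\<Sum>g\<in>monics k. norm (S g))^2 \<le> (\<Sum>g\<in>monics k. (norm (S g))^2) * real (card (monics k :: 'a poly set))"
    by (rule sum_squared_le_sum_of_squares)
  have "of_real (\<Sum>g\<in>monics k. (norm (S g))^2) = (\<Sum>g\<in>(monics k :: 'a poly set). S g * cnj (S g))"
    unfolding of_real_sum by (intro sum.cong refl complex_norm_square)
  also have "\<dots> = (\<Sum>g\<in>monics k. \<Sum>h1\<in>monics L. \<Sum>h2\<in>monics L. \<psi> (QA m c lf (g*h1) - QA m c lf (g*h2)))"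
    by (simp add: S_def sum_distrib_left sum_distrib_right cnj_sum char_diff[OF ac], rule sum.cong[OF refl], rule sum.swap)
  also have "\<dots> = (\<Sum>h1\<in>monics L. \<Sum>g\<in>monics k. \<Sum>h2\<in>monics L. \<psi> (QA m c lf (g*h1) - QA m c lf (g*h2)))"
    by (rule sum.swap)
  also have "\<dots> = (\<Sum>h1\<in>monics L. \<Sum>h2\<in>monics L. \<Sum>g\<in>monics k. \<psi> (QA m c lf (g*h1) - QA m c lf (g*h2)))"
    by (intro sum.cong refl sum.swap)
  finally have eq: "of_real (\<Sum>g\<in>monics k. (norm (S g))^2) = \<dots>" .
  have nn: "(\<Sum>g\<in>(monics k :: 'a poly set). (norm (S g))^2) \<ge> 0" by (intro sum_nonneg) auto
  have "(\<Sum>g\<in>monics k. (norm (S g))^2) = norm (of_real (\<Sum>g\<in>(monics k :: 'a poly set). (norm (S g))^2) :: complex)"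
    using nn by (simp only: norm_of_real abs_of_nonneg)
  also have "\<dots> \<le> (\<Sum>h1\<in>monics L. norm (\<Sum>h2\<in>monics L. \<Sum>g\<in>monics k. \<psi> (QA m c lf (g*h1) - QA m c lf (g*h2))))"
    unfolding eq by (rule norm_sum)
  also have "\<dots> \<le> (\<Sum>h1\<in>monics L. \<Sum>h2\<in>monics L. norm (\<Sum>g\<in>monics k. \<psi> (QA m c lf (g*h1) - QA m c lf (g*h2))))"
    by (intro sum_mono norm_sum)
  finally have le: "(\<Sum>g\<in>monics k. (norm (S g))^2) \<le> \<dots>" .
  have "(Tsum m c lf \<psi> n k)^2 \<le> (\<Sum>g\<in>monics k. (norm (S g))^2) * real (CARD('a)^k)"
    using cs by (simp add: T card_monics)
  also have "\<dots> \<le> (\<Sum>h1\<in>monics L. \<Sum>h2\<in>monics L. norm (\<Sum>g\<in>monics k. \<psi> (QA m c lf (g*h1) - QA m c lf (g*h2)))) * real (CARD('a)^k)"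
    using le by (intro mult_right_mono) auto
  finally show ?thesis by (simp add: L_def mult.commute)
qed

lemma UU_bound:
  fixes \<psi> :: "'a::{field,finite} \<Rightarrow> complex" and lf :: "nat \<Rightarrow> nat \<Rightarrow> 'a"
  assumes psi: "nontrivial_add_char \<psi>" and odd: "odd CARD('a)" and cm: "c m \<noteq> 0" and kn: "k \<le> n"
  shows "(\<Sum>h1\<in>monics (n-k). \<Sum>h2\<in>monics (n-k). norm (\<Sum>g\<in>monics k. \<psi> (QA m c lf (g*h1) - QA m c lf (g*h2))))
    \<le> real (CARD('a)^(n-k)) * (real (CARD('a)^k) * real (dvmax TYPE('a) (2*n))
        + real (CARD('a)^(n-k)) * sqrt (real (CARD('a)^k) * real (CARD('a)^((n-k)+m))))"
proof -
  have ac: "add_char \<psi>" using psi by (simp add: nontrivial_add_char_def)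
  define L where "L = n - k"
  have n: "n = k + L" using kn by (simp add: L_def)
  define q where "q = real CARD('a)"
  define B where "B = sqrt (real (CARD('a)^k) * real (CARD('a)^(L+m)))"
  have B0: "B \<ge> 0" by (simp add: B_def)
  have pt: "norm (\<Sum>g\<in>monics k. \<psi> (QA m c lf (g*h1) - QA m c lf (g*h2)))
            \<le> (if Hh L h2 = Hh L h1 then real (CARD('a)^k) else 0) + B"
    if h1: "h1 \<in> monics L" and h2: "h2 \<in> monics L" for h1 h2
  proof (cases "Hh L h2 = Hh L h1")
    case True
    thus ?thesis using U_trivial[OF ac] B0 by (simp add: add_increasing2)
  next
    case False
    hence "Hh L h1 \<noteq> Hh L h2" by auto
    thus ?thesis using offdiag_bound[where c=c and m=m, OF psi odd cm h1 h2 n] False by (simp add: B_def)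
  qed
  have inner: "(\<Sum>h2\<in>monics L. norm (\<Sum>g\<in>monics k. \<psi> (QA m c lf (g*h1) - QA m c lf (g*h2))))
       \<le> real (CARD('a)^k) * real (dvmax TYPE('a) (2*n)) + real (CARD('a)^L) * B"
    if h1: "h1 \<in> monics L" for h1
  proof -
    have "(\<Sum>h2\<in>monics L. norm (\<Sum>g\<in>monics k. \<psi> (QA m c lf (g*h1) - QA m c lf (g*h2))))
        \<le> (\<Sum>h2\<in>monics L. (if Hh L h2 = Hh L h1 then real (CARD('a)^k) else 0) + B)"
      using pt[OF h1] by (intro sum_mono) auto
    also have "\<dots> = real (CARD('a)^k) * real (card {h2\<in>monics L. Hh L h2 = Hh L h1}) + real (CARD('a)^L) * B"
      by (simp add: sum.distrib sum.If_cases finite_monics card_monics Int_def conj_commute)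
    also have "\<dots> \<le> real (CARD('a)^k) * real (dvmax TYPE('a) (2*n)) + real (CARD('a)^L) * B"
      using diag_count[OF h1, of n] kn by (intro add_right_mono mult_left_mono) (auto simp: L_def)
    finally show ?thesis .
  qed
  have "(\<Sum>h1\<in>monics L. \<Sum>h2\<in>monics L. norm (\<Sum>g\<in>monics k. \<psi> (QA m c lf (g*h1) - QA m c lf (g*h2))))
      \<le> (\<Sum>h1\<in>(monics L :: 'a poly set). real (CARD('a)^k) * real (dvmax TYPE('a) (2*n)) + real (CARD('a)^L) * B)"
    using inner by (intro sum_mono) auto
  also have "\<dots> = real (CARD('a)^L) * (real (CARD('a)^k) * real (dvmax TYPE('a) (2*n)) + real (CARD('a)^L) * B)"
    by (simp add: card_monics)
  finally show ?thesis by (simp add: L_def B_def)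
qed



lemma card_ge2: "CARD('a::{field,finite}) \<ge> 2"
proof -
  have "card {0::'a, 1} = 2" by simp
  moreover have "card {0::'a, 1} \<le> CARD('a)" by (rule card_mono) auto
  ultimately show ?thesis by simp
qed

lemma eps_pow:
  assumes n: "n > 0"
  shows "real CARD('a::{field,finite}) powr (2 * (eps TYPE('a) n * real n)) = real (dvmax TYPE('a) (2*n))"
proof -
  define Q where "Q = real CARD('a)"
  define d where "d = real (dvmax TYPE('a) (2*n))"
  have Q: "Q > 1" using card_ge2[where 'a='a] by (simp add: Q_def)
  have d: "d \<ge> 1" using dvmax_pos by (simp add: d_def)
  have "2 * (eps TYPE('a) n * real n) = ln d / ln Q"
    using n Q by (simp add: eps_def d_def Q_def field_simps)
  hence "Q powr (2 * (eps TYPE('a) n * real n)) = exp (ln d / ln Q * ln Q)"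
    using Q by (simp add: powr_def)
  also have "\<dots> = d" using Q d by simp
  finally show ?thesis by (simp add: Q_def d_def)
qed

lemma final_arith:
  fixes Q T d d0 C m k n :: real
  assumes Q: "Q > 1" and T0: "T \<ge> 0"
    and T2: "T^2 \<le> Q powr (2*k + (n - k)) * d + Q powr (k + 2*(n-k) + (k + (n-k) + m)/2)"
    and d: "d \<ge> 1" and d0: "d0 \<ge> 1" and W: "d \<le> d0 * W" and W0: "W \<ge> 0"
    and k1: "k \<ge> 3*n/5 - C" and k2: "k \<le> 9*n/10 + C" and m: "m \<ge> 0"
  shows "T \<le> sqrt (2 * Q powr (C + m/2) * d0) * (Q powr (19*n/20) * sqrt W)"
proof -
  define E where "E = 19*n/10 + C + m/2"
  have e1: "2*k + (n - k) \<le> E" unfolding E_def using k2 m by linarith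
  have h: "(k + (n-k) + m)/2 = n/2 + m/2" by (simp add: add_divide_distrib)
  have e2: "k + 2*(n-k) + (k + (n-k) + m)/2 \<le> E" unfolding E_def h using k1 by argo
  define a where "a = Q powr E"
  have a0: "a \<ge> 0" by (simp add: a_def)
  have p1: "Q powr (2*k + (n - k)) \<le> a" unfolding a_def by (rule powr_mono[OF e1]) (use Q in simp)
  have p2: "Q powr (k + 2*(n-k) + (k + (n-k) + m)/2) \<le> a" unfolding a_def by (rule powr_mono[OF e2]) (use Q in simp)
  have "Q powr (2*k + (n - k)) * d \<le> a * d" using p1 d by (intro mult_right_mono) auto
  hence s1: "T^2 \<le> a * d + a" using T2 p2 by linarith
  have "a \<le> a * d" using a0 d by (metis mult_left_mono mult_1_right)
  hence "T^2 \<le> 2 * (a * d)" using s1 by linarith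
  also have "\<dots> \<le> 2 * (a * (d0 * W))" using W a0 by (intro mult_left_mono) auto
  also have "\<dots> = (sqrt (2 * Q powr (C + m/2) * d0) * (Q powr (19*n/20) * sqrt W))^2"
  proof -
    have ex: "E = (C + m/2) + 19*n/20 + 19*n/20" unfolding E_def by simp
    have "a = Q powr (C + m/2) * Q powr (19*n/20) * Q powr (19*n/20)"
      unfolding a_def ex by (simp only: powr_add mult.assoc)
    moreover have "(sqrt (2 * Q powr (C + m/2) * d0))^2 = 2 * Q powr (C + m/2) * d0" using d0 by simp
    moreover have "(sqrt W)^2 = W" using W0 by simp
    ultimately show ?thesis by (simp add: power_mult_distrib power2_eq_square ac_simps)
  qed
  finally show ?thesis
    by (rule power2_le_imp_le) (use Q d0 W0 in auto)
qed



lemma sqrt_powr: "Q > 0 \<Longrightarrow> sqrt (Q powr x) = Q powr (x/2)"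
  by (simp add: powr_half_sqrt[symmetric] powr_powr)

lemma pw: "Q > 0 \<Longrightarrow> Q ^ n = Q powr (real n)"
  by (simp add: powr_realpow)

lemma T2_convert:
  fixes Q dv T :: real and k L m :: nat
  assumes Q: "Q > 0"
    and T2: "T^2 \<le> Q^k * (Q^L * (Q^k * dv + Q^L * sqrt (Q^k * Q^(L+m))))"
  shows "T^2 \<le> Q powr (2*real k + real L) * dv + Q powr (real k + 2*real L + (real k + real L + real m)/2)"
proof -
  have a: "Q^k * (Q^L * (Q^k * dv + Q^L * sqrt (Q^k * Q^(L+m))))
        = (Q^k * Q^k * Q^L) * dv + (Q^k * Q^L * Q^L) * sqrt (Q^k * Q^L * Q^m)"
    by (simp only: power_add distrib_left ac_simps)
  have b: "Q^k * Q^k * Q^L = Q powr (2*real k + real L)"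
    using Q by (simp only: pw powr_add[symmetric] mult_2 of_nat_add)
  have c: "Q^k * Q^L * Q^L = Q powr (real k + 2*real L)"
    using Q by (simp only: pw powr_add[symmetric] mult_2 of_nat_add add.assoc)
  have d: "sqrt (Q^k * Q^L * Q^m) = Q powr ((real k + real L + real m)/2)"
    using Q by (simp only: pw powr_add[symmetric] sqrt_powr)
  have "(Q^k * Q^L * Q^L) * sqrt (Q^k * Q^L * Q^m) = Q powr (real k + 2*real L + (real k + real L + real m)/2)"
    unfolding c d by (simp only: powr_add[symmetric])
  thus ?thesis using T2 unfolding a b by simp
qed

theorem proposition7p3:
  fixes m :: nat and c :: "nat \<Rightarrow> 'a::{field,finite}" and C :: real
  assumes "odd CARD('a)" and "c m \<noteq> 0" and "C \<ge> 0"
  shows "\<exists>K::real. \<exists>\<epsilon>::nat \<Rightarrow> real. \<epsilon> \<longlonglongrightarrow> 0 \<and>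
    (\<forall>n k (lf :: nat \<Rightarrow> nat \<Rightarrow> 'a) (\<psi> :: 'a \<Rightarrow> complex).
       nontrivial_add_char \<psi> \<and> real k \<ge> 3 * real n / 5 - C \<and> real k \<le> 9 * real n / 10 + C
       \<and> k \<le> n \<longrightarrow>
       Tsum m c lf \<psi> n k \<le> K * real CARD('a) powr (19 * real n / 20 + \<epsilon> n * real n))"
proof -
  note odd = assms(1) and cm = assms(2)
  define Q where "Q = real CARD('a)"
  have Q1: "Q > 1" using card_ge2[where 'a='a] by (simp add: Q_def)
  define d0 where "d0 = real (dvmax TYPE('a) 0)"
  have d01: "d0 \<ge> 1" using dvmax_pos by (simp add: d0_def)
  define K where "K = sqrt (2 * Q powr (C + real m/2) * d0)"
  have lim: "eps TYPE('a) \<longlonglongrightarrow> 0" by (rule eps_tendsto[OF card_ge2])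
  have main: "Tsum m c lf \<psi> n k \<le> K * Q powr (19 * real n / 20 + eps TYPE('a) n * real n)"
    if psi: "nontrivial_add_char \<psi>" and k1: "real k \<ge> 3 * real n / 5 - C"
      and k2: "real k \<le> 9 * real n / 10 + C" and kn: "k \<le> n"
    for n k :: nat and lf :: "nat \<Rightarrow> nat \<Rightarrow> 'a" and \<psi> :: "'a \<Rightarrow> complex"
  proof -
    define L where "L = n - k"
    define T where "T = Tsum m c lf \<psi> n k"
    define dv where "dv = real (dvmax TYPE('a) (2*n))"
    have dv1: "dv \<ge> 1" using dvmax_pos by (simp add: dv_def)
    have T0: "T \<ge> 0" by (simp add: T_def Tsum_def sum_nonneg)
    have "T^2 \<le> real (CARD('a)^k) *
     (\<Sum>h1\<in>monics (n-k). \<Sum>h2\<in>monics (n-k). norm (\<Sum>g\<in>monics k. \<psi> (QA m c lf (g*h1) - QA m c lf (g*h2))))"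
      unfolding T_def by (rule T_sq[OF psi])
    also have "\<dots> \<le> real (CARD('a)^k) * (real (CARD('a)^(n-k)) * (real (CARD('a)^k) * dv
        + real (CARD('a)^(n-k)) * sqrt (real (CARD('a)^k) * real (CARD('a)^((n-k)+m)))))"
      unfolding dv_def by (intro mult_left_mono UU_bound[where c=c and m=m, OF psi odd cm kn]) auto
    finally have "T^2 \<le> Q^k * (Q^L * (Q^k * dv + Q^L * sqrt (Q^k * Q^(L+m))))"
      by (simp add: Q_def L_def)
    hence T2: "T^2 \<le> Q powr (2*real k + real L) * dv + Q powr (real k + 2*real L + (real k + real L + real m)/2)"
      using Q1 by (intro T2_convert) auto
    have rL: "real L = real n - real k" using kn by (simp add: L_def)
    define W where "W = Q powr (2 * (eps TYPE('a) n * real n))"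
    have W0: "W \<ge> 0" by (simp add: W_def)
    have W: "dv \<le> d0 * W"
    proof (cases "n = 0")
      case True
      have "W = 1" unfolding W_def True using Q1 by simp
      moreover have "dv = d0" unfolding dv_def d0_def True by simp
      ultimately show ?thesis by simp
    next
      case False
      hence "W = dv" unfolding W_def dv_def Q_def by (intro eps_pow) simp
      thus ?thesis using d01 dv1 by simp
    qed
    have "T \<le> sqrt (2 * Q powr (C + real m/2) * d0) * (Q powr (19*real n/20) * sqrt W)"
      by (rule final_arith[OF Q1 T0 T2[unfolded rL] dv1 d01 W W0 k1 k2]) simp
    also have "sqrt W = Q powr (eps TYPE('a) n * real n)"
      unfolding W_def using Q1 by (simp add: sqrt_powr)
    also have "Q powr (19*real n/20) * Q powr (eps TYPE('a) n * real n) = Q powr (19 * real n / 20 + eps TYPE('a) n * real n)"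
      by (simp add: powr_add)
    finally show ?thesis by (simp add: T_def K_def)
  qed
  show ?thesis
  proof (intro exI[of _ K] exI[of _ "eps TYPE('a)"] conjI lim allI impI)
    fix n k :: nat and lf :: "nat \<Rightarrow> nat \<Rightarrow> 'a" and \<psi> :: "'a \<Rightarrow> complex"
    assume H: "nontrivial_add_char \<psi> \<and> 3 * real n / 5 - C \<le> real k \<and> real k \<le> 9 * real n / 10 + C \<and> k \<le> n"
    show "Tsum m c lf \<psi> n k \<le> K * real CARD('a) powr (19 * real n / 20 + eps TYPE('a) n * real n)"
      using main[where n=n and k=k and lf=lf and \<psi>=\<psi>] H unfolding Q_def by blast
  qed
qed

end
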